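(* Let $d\geq 2$ and let $G$ be a graph of order $n\geq 2$. (1) If there are distinct vertices $u,v$ with $N_G[v]\subseteq N_G[u]$, then $BI_d(G)\simeq BI_d(G-v)$. (2) If there are distinct vertices $u,v$ with $N_G(v)\subseteq N_G(u)$, then $BI_d(G)\simeq BI_d(G-v)\vee\Sigma\,\mathrm{lk}_{BI_d(G)}(v)$.
   Context: All graphs are finite and simple; $\alpha(G)$ is the independence number, $G[S]$ the induced subgraph on $S$, $G-v=G[V(G)\setminus\{v\}]$, $N_G(v)$ the open and $N_G[v]=N_G(v)\cup\{v\}$ the closed neighborhood. $BI_d(G)=\{\sigma\subseteq V(G):\ \alpha(G[\sigma])<d\}$. For a simplicial complex $K$ and vertex $v$, $\mathrm{lk}_K(v)=\{\tau\in K: v\notin\tau,\ \tau\cup\{v\}\in K\}$. $\Sigma$ denotes suspension and $\vee$ wedge sum. *)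

theory Defs
  imports "HOL-Analysis.Analysis"
begin

definition simple_graph :: "'a set \<Rightarrow> ('a \<Rightarrow> 'a \<Rightarrow> bool) \<Rightarrow> bool" where
  "simple_graph V E \<longleftrightarrow> finite V \<and> (\<forall>x y. E x y \<longrightarrow> x \<in> V \<and> y \<in> V)
     \<and> (\<forall>x y. E x y \<longrightarrow> E y x) \<and> (\<forall>x. \<not> E x x)"

definition open_nbhd :: "'a set \<Rightarrow> ('a \<Rightarrow> 'a \<Rightarrow> bool) \<Rightarrow> 'a \<Rightarrow> 'a set" where
  "open_nbhd V E v = {u \<in> V. E v u}"

definition closed_nbhd :: "'a set \<Rightarrow> ('a \<Rightarrow> 'a \<Rightarrow> bool) \<Rightarrow> 'a \<Rightarrow> 'a set" where
  "closed_nbhd V E v = insert v (open_nbhd V E v)"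

text \<open>G - v: vertex set V - {v}, edges among remaining vertices.\<close>
definition del_edges :: "('a \<Rightarrow> 'a \<Rightarrow> bool) \<Rightarrow> 'a \<Rightarrow> 'a \<Rightarrow> 'a \<Rightarrow> bool" where
  "del_edges E v = (\<lambda>x y. E x y \<and> x \<noteq> v \<and> y \<noteq> v)"

definition indep :: "('a \<Rightarrow> 'a \<Rightarrow> bool) \<Rightarrow> 'a set \<Rightarrow> bool" where
  "indep E S \<longleftrightarrow> (\<forall>x\<in>S. \<forall>y\<in>S. \<not> E x y)"

definition alpha :: "('a \<Rightarrow> 'a \<Rightarrow> bool) \<Rightarrow> 'a set \<Rightarrow> nat" where
  "alpha E \<sigma> = Max (card ` {S. S \<subseteq> \<sigma> \<and> indep E S})"

definition BI :: "nat \<Rightarrow> 'a set \<Rightarrow> ('a \<Rightarrow> 'a \<Rightarrow> bool) \<Rightarrow> 'a set set" where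
  "BI d V E = {\<sigma>. \<sigma> \<subseteq> V \<and> alpha E \<sigma> < d}"

text \<open>Simplicial complexes are represented as (finite) downward closed families of finite sets.\<close>
definition link :: "'a set set \<Rightarrow> 'a \<Rightarrow> 'a set set" where
  "link K v = {\<tau> \<in> K. v \<notin> \<tau> \<and> insert v \<tau> \<in> K}"

text \<open>Suspension: join with the two-point complex S^0 (poles Inr True, Inr False).\<close>
definition susp :: "'a set set \<Rightarrow> ('a + bool) set set" where
  "susp K = {Inl ` \<sigma> \<union> Inr ` T | \<sigma> T. \<sigma> \<in> K \<and> T \<noteq> UNIV}"

definition wedge :: "'a set set \<Rightarrow> 'b set set \<Rightarrow> 'a \<Rightarrow> 'b \<Rightarrow> ('a + 'b) set set" where
  "wedge K L a0 b0 = (image Inl) ` K \<union> (image (\<lambda>y. if y = b0 then Inl a0 else Inr y)) ` L"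

text \<open>Geometric realization: barycentric coordinate functions supported on a face.\<close>
definition geom :: "'a set set \<Rightarrow> ('a \<Rightarrow> real) topology" where
  "geom K = subtopology (powertop_real UNIV)
     {f. (\<forall>x. 0 \<le> f x) \<and> finite {x. f x \<noteq> 0} \<and> {x. f x \<noteq> 0} \<in> K \<and> sum f {x. f x \<noteq> 0} = 1}"

definition htpy_eq :: "'a set set \<Rightarrow> 'b set set \<Rightarrow> bool" (infix "\<simeq>\<^sub>c" 50) where
  "K \<simeq>\<^sub>c L \<longleftrightarrow> geom K homotopy_equivalent_space geom L"

end

theory Submission
  imports Defs
begin

definition dc :: "'a set set \<Rightarrow> bool" where
  "dc K \<longleftrightarrow> (\<forall>\<sigma>\<in>K. \<forall>\<tau>. \<tau> \<subseteq> \<sigma> \<longrightarrow> \<tau> \<in> K)"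

lemma dcD: "dc K \<Longrightarrow> \<sigma> \<in> K \<Longrightarrow> \<tau> \<subseteq> \<sigma> \<Longrightarrow> \<tau> \<in> K"
  unfolding dc_def by blast

lemma topspace_geom:
  "topspace (geom K) = {f. (\<forall>x. 0 \<le> f x) \<and> finite {x. f x \<noteq> 0} \<and> {x. f x \<noteq> 0} \<in> K \<and> sum f {x. f x \<noteq> 0} = 1}"
  by (simp add: geom_def)

lemma geomI:
  assumes "dc K" "\<And>x. 0 \<le> f x" "finite F" "{x. f x \<noteq> 0} \<subseteq> F" "\<sigma> \<in> K" "{x. f x \<noteq> 0} \<subseteq> \<sigma>" "sum f F = 1"
  shows "f \<in> topspace (geom K)"
proof -
  have fin: "finite {x. f x \<noteq> 0}" using assms(3,4) finite_subset by blast
  have "sum f {x. f x \<noteq> 0} = sum f F"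
    by (rule sum.mono_neutral_left) (use assms(3,4) in auto)
  moreover have "{x. f x \<noteq> 0} \<in> K" using assms(1,5,6) unfolding dc_def by blast
  ultimately show ?thesis using assms fin by (simp add: topspace_geom)
qed

lemma geomD:
  assumes "f \<in> topspace (geom K)"
  shows "\<And>x. 0 \<le> f x" "finite {x. f x \<noteq> 0}" "{x. f x \<noteq> 0} \<in> K"
    "\<And>F. finite F \<Longrightarrow> {x. f x \<noteq> 0} \<subseteq> F \<Longrightarrow> sum f F = 1"
proof -
  show "\<And>x. 0 \<le> f x" "finite {x. f x \<noteq> 0}" "{x. f x \<noteq> 0} \<in> K"
    using assms by (auto simp: topspace_geom)
  fix F assume "finite F" "{x. f x \<noteq> 0} \<subseteq> F"
  then have "sum f {x. f x \<noteq> 0} = sum f F"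
    by (intro sum.mono_neutral_left) auto
  then show "sum f F = 1" using assms by (simp add: topspace_geom)
qed

lemma cont_geom:
  assumes "\<And>f. f \<in> topspace X \<Longrightarrow> F f \<in> topspace (geom B)"
    and "\<And>y. continuous_map X euclideanreal (\<lambda>f. F f y)"
  shows "continuous_map X (geom B) F"
  unfolding geom_def continuous_map_in_subtopology continuous_map_componentwise_UNIV
  using assms by (auto simp: topspace_geom)

lemma proj_cont: "continuous_map (geom K) euclideanreal (\<lambda>f. f y)"
  unfolding geom_def by (intro continuous_intros) auto

lemma cm_in: "continuous_map X Y F \<Longrightarrow> x \<in> topspace X \<Longrightarrow> F x \<in> topspace Y"
  unfolding continuous_map_def by blast

lemma SL:
  assumes "dc B" and P: "continuous_map X (geom B) P" and Q: "continuous_map X (geom B) Q"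
    and U: "\<And>f. f \<in> topspace X \<Longrightarrow> {y. P f y \<noteq> 0} \<union> {y. Q f y \<noteq> 0} \<in> B"
  shows "homotopic_with (\<lambda>x. True) X (geom B) P Q"
proof -
  define h where "h = (\<lambda>z::real \<times> _. \<lambda>y. (1 - fst z) * P (snd z) y + fst z * Q (snd z) y)"
  have "continuous_map (prod_topology (top_of_set {0..1}) X) (geom B) h"
  proof (rule cont_geom)
    fix y
    have cP: "continuous_map X euclideanreal (\<lambda>f. P f y)"
      using continuous_map_compose[OF P proj_cont[of B y]] by (simp add: o_def)
    have cQ: "continuous_map X euclideanreal (\<lambda>f. Q f y)"
      using continuous_map_compose[OF Q proj_cont[of B y]] by (simp add: o_def)
    have f1: "continuous_map (prod_topology (top_of_set {0..1}) X) euclideanreal (\<lambda>z. fst z :: real)"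
      using continuous_map_fst continuous_map_into_fulltopology by blast
    have s1: "continuous_map (prod_topology (top_of_set {0..1::real}) X) euclideanreal (\<lambda>z. P (snd z) y)"
      using continuous_map_compose[OF continuous_map_snd cP] by (simp add: o_def)
    have s2: "continuous_map (prod_topology (top_of_set {0..1::real}) X) euclideanreal (\<lambda>z. Q (snd z) y)"
      using continuous_map_compose[OF continuous_map_snd cQ] by (simp add: o_def)
    have "continuous_map (prod_topology (top_of_set {0..1}) X) euclideanreal
        (\<lambda>z. (1 - fst z) * P (snd z) y + fst z * Q (snd z) y)"
      by (rule continuous_map_add[OF continuous_map_real_mult[OF continuous_map_diff[OF continuous_map_canonical_const f1] s1] continuous_map_real_mult[OF f1 s2]])
    then show "continuous_map (prod_topology (top_of_set {0..1}) X) euclideanreal (\<lambda>z. h z y)"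
      by (simp add: h_def)
  next
    fix z assume z: "z \<in> topspace (prod_topology (top_of_set {0..1::real}) X)"
    obtain s f where zsf: "z = (s, f)" by (cases z)
    have s: "0 \<le> s" "s \<le> 1" and f: "f \<in> topspace X"
      using z by (simp_all add: zsf topspace_prod_topology)
    have Pf: "P f \<in> topspace (geom B)" using P f by (rule cm_in)
    have Qf: "Q f \<in> topspace (geom B)" using Q f by (rule cm_in)
    define S where "S = {y. P f y \<noteq> 0} \<union> {y. Q f y \<noteq> 0}"
    have fin: "finite S" using geomD(2)[OF Pf] geomD(2)[OF Qf] by (simp add: S_def)
    have "sum (h z) S = (1 - s) * sum (P f) S + s * sum (Q f) S"
      by (simp add: h_def zsf sum.distrib sum_distrib_left)
    also have "\<dots> = 1" using geomD(4)[OF Pf fin] geomD(4)[OF Qf fin] by (simp add: S_def)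
    finally have sum1: "sum (h z) S = 1" .
    have US: "S \<in> B" using U[OF f] by (simp add: S_def)
    show "h z \<in> topspace (geom B)"
    proof (rule geomI[OF assms(1) _ fin _ US])
      show "0 \<le> h z x" for x using s geomD(1)[OF Pf] geomD(1)[OF Qf] by (simp add: h_def zsf)
      show "{x. h z x \<noteq> 0} \<subseteq> S" by (auto simp: h_def zsf S_def)
      then show "{x. h z x \<noteq> 0} \<subseteq> S" .
      show "sum (h z) S = 1" by (rule sum1)
    qed
  qed
  moreover have "\<forall>x. h (0, x) = P x" "\<forall>x. h (1, x) = Q x" by (auto simp: h_def)
  ultimately show ?thesis unfolding homotopic_with_def by blast
qed

definition good :: "('a \<Rightarrow> 'a \<Rightarrow> bool) \<Rightarrow> nat \<Rightarrow> 'a set \<Rightarrow> bool" where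
  "good E d \<sigma> \<longleftrightarrow> (\<forall>S\<subseteq>\<sigma>. indep E S \<longrightarrow> card S < d)"

lemma alpha_less:
  assumes "finite \<sigma>"
  shows "alpha E \<sigma> < d \<longleftrightarrow> good E d \<sigma>"
proof -
  have fin: "finite (card ` {S. S \<subseteq> \<sigma> \<and> indep E S})" using assms by auto
  have ne: "card ` {S. S \<subseteq> \<sigma> \<and> indep E S} \<noteq> {}"
  proof -
    have "{} \<in> {S. S \<subseteq> \<sigma> \<and> indep E S}" by (simp add: indep_def)
    then show ?thesis by blast
  qed
  show ?thesis unfolding alpha_def good_def Max_less_iff[OF fin ne] by auto
qed

lemma BI_eq:
  assumes "finite V"
  shows "BI d V E = {\<sigma>. \<sigma> \<subseteq> V \<and> good E d \<sigma>}"
  unfolding BI_def using alpha_less assms finite_subset by blast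

lemma good_mono: "good E d \<sigma> \<Longrightarrow> \<tau> \<subseteq> \<sigma> \<Longrightarrow> good E d \<tau>"
  unfolding good_def by blast

lemma dc_BI: "finite V \<Longrightarrow> dc (BI d V E)"
  unfolding dc_def BI_eq by (auto intro: good_mono)

lemma good_del:
  assumes "v \<notin> \<sigma>"
  shows "good (del_edges E v) d \<sigma> \<longleftrightarrow> good E d \<sigma>"
proof -
  have "indep (del_edges E v) S \<longleftrightarrow> indep E S" if "S \<subseteq> \<sigma>" for S
    using that assms unfolding indep_def del_edges_def by blast
  then show ?thesis unfolding good_def by blast
qed

lemma BI_del:
  assumes "finite V"
  shows "BI d (V - {v}) (del_edges E v) = {\<sigma> \<in> BI d V E. v \<notin> \<sigma>}"
proof -
  have "good (del_edges E v) d \<sigma> \<longleftrightarrow> good E d \<sigma>" if "\<sigma> \<subseteq> V - {v}" for \<sigma>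
    using that by (intro good_del) blast
  then show ?thesis using assms by (auto simp: BI_eq)
qed

lemma exch:
  assumes "indep E S" "u \<in> S" "v \<notin> S" "finite S"
    and "\<And>x. x \<in> S \<Longrightarrow> x \<noteq> u \<Longrightarrow> \<not> E v x \<and> \<not> E x v" "\<not> E v v"
  shows "indep E (insert v (S - {u}))" "card (insert v (S - {u})) = card S"
proof -
  show "indep E (insert v (S - {u}))" using assms unfolding indep_def by auto
  have "card (insert v (S - {u})) = Suc (card (S - {u}))" using assms by simp
  also have "\<dots> = card S" using assms card_Suc_Diff1 by metis
  finally show "card (insert v (S - {u})) = card S" .
qed

lemma sg_facts:
  assumes "simple_graph V E"
  shows "finite V" "\<And>x y. E x y \<Longrightarrow> x \<in> V" "\<And>x y. E x y \<Longrightarrow> y \<in> V"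
    "\<And>x y. E x y \<Longrightarrow> E y x" "\<And>x. \<not> E x x"
  using assms unfolding simple_graph_def by blast+

lemma sum_move:
  assumes "finite V" "u \<in> V" "v \<in> V" "u \<noteq> v"
  shows "sum (\<lambda>x. if x = v then 0 else if x = u then f u + f v else f x) V = sum f V"
proof -
  define g where "g = (\<lambda>x. if x = v then 0 else if x = u then f u + f v else f x)"
  have 1: "sum g V = g v + sum g (V - {v})" by (rule sum.remove) (use assms in auto)
  have 2: "sum g (V-{v}) = g u + sum g (V-{v}-{u})" by (rule sum.remove) (use assms in auto)
  have 3: "sum f V = f v + sum f (V-{v})" by (rule sum.remove) (use assms in auto)
  have 4: "sum f (V-{v}) = f u + sum f (V-{v}-{u})" by (rule sum.remove) (use assms in auto)
  have 5: "sum g (V-{v}-{u}) = sum f (V-{v}-{u})" by (rule sum.cong) (auto simp: g_def)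
  have "sum g V = sum f V" using 1 2 3 4 5 assms by (simp add: g_def algebra_simps)
  then show ?thesis by (simp add: g_def)
qed

lemma part1:
  assumes sg: "simple_graph V E" and uV: "u \<in> V" and vV: "v \<in> V" and uv: "u \<noteq> v"
    and N: "closed_nbhd V E v \<subseteq> closed_nbhd V E u"
  shows "BI d V E \<simeq>\<^sub>c BI d (V - {v}) (del_edges E v)"
proof -
  note sgf = sg_facts[OF sg]
  define K where "K = BI d V E"
  define K' where "K' = BI d (V - {v}) (del_edges E v)"
  have Keq: "K = {\<sigma>. \<sigma> \<subseteq> V \<and> good E d \<sigma>}" using BI_eq[OF sgf(1)] K_def by blast
  have K'eq: "K' = {\<sigma> \<in> K. v \<notin> \<sigma>}" using BI_del[OF sgf(1)] K_def K'_def by blast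
  have dcK: "dc K" using dc_BI[OF sgf(1)] K_def by blast
  have dcK': "dc K'" using dc_BI sgf(1) K'_def by blast
  have Euv: "E u v" using N uv vV unfolding closed_nbhd_def open_nbhd_def by auto
  have Nv: "x = u \<or> E u x" if "E v x" for x using N that sgf(3)[OF that] unfolding closed_nbhd_def open_nbhd_def by auto
  have cone: "insert u \<sigma> \<in> K" if "\<sigma> \<in> K" "v \<in> \<sigma>" for \<sigma>
  proof -
    have sV: "\<sigma> \<subseteq> V" and gs: "good E d \<sigma>" using that Keq by auto
    have "good E d (insert u \<sigma>)" unfolding good_def
    proof (intro allI impI)
      fix S assume S: "S \<subseteq> insert u \<sigma>" and iS: "indep E S"
      have finS: "finite S" using S sV uV sgf(1) by (meson finite_insert finite_subset)
      show "card S < d"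
      proof (cases "u \<in> S")
        case False
        then show ?thesis using S iS gs unfolding good_def by blast
      next
        case True
        have vS: "v \<notin> S" using True iS Euv unfolding indep_def by blast
        have nb: "\<not> E v x \<and> \<not> E x v" if "x \<in> S" "x \<noteq> u" for x
          using Nv[of x] sgf(4)[of x v] iS True that unfolding indep_def by blast
        note ex = exch[OF iS True vS finS nb sgf(5)]
        have "insert v (S - {u}) \<subseteq> \<sigma>" using S that(2) by blast
        then have "card (insert v (S - {u})) < d" using ex(1) gs unfolding good_def by blast
        then show ?thesis using ex(2) by simp
      qed
    qed
    then show ?thesis using sV uV Keq by auto
  qed
  define r where "r = (\<lambda>f::'a\<Rightarrow>real. \<lambda>x. if x = v then 0 else if x = u then f u + f v else f x)"
  have inV: "{x. f x \<noteq> 0} \<subseteq> V" if "f \<in> topspace (geom K)" for f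
    using geomD(3)[OF that] Keq by auto
  have rK: "r f \<in> topspace (geom K')" if f: "f \<in> topspace (geom K)" for f
  proof -
    define \<tau> where "\<tau> = (if f v = 0 then {x. f x \<noteq> 0} else insert u ({x. f x \<noteq> 0} - {v}))"
    have sK: "{x. f x \<noteq> 0} \<in> K" by (rule geomD(3)[OF f])
    have tK: "\<tau> \<in> K'"
    proof (cases "f v = 0")
      case True then show ?thesis using sK K'eq \<tau>_def by auto
    next
      case False
      have "insert u {x. f x \<noteq> 0} \<in> K" using cone[OF sK] False by simp
      then have "insert u ({x. f x \<noteq> 0} - {v}) \<in> K" by (rule dcD[OF dcK]) blast
      then show ?thesis using False K'eq \<tau>_def uv by auto
    qed
    show ?thesis
    proof (rule geomI[OF dcK' _ sgf(1) _ tK])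
      show "0 \<le> r f x" for x using geomD(1)[OF f] by (simp add: r_def add_nonneg_nonneg)
      show "{x. r f x \<noteq> 0} \<subseteq> V" using inV[OF f] uV by (auto simp: r_def split: if_splits)
      show "{x. r f x \<noteq> 0} \<subseteq> \<tau>" by (auto simp: r_def \<tau>_def split: if_splits)
      show "sum (r f) V = 1" unfolding r_def sum_move[OF sgf(1) uV vV uv] using geomD(4)[OF f sgf(1) inV[OF f]] .
    qed
  qed
  have K'K: "f \<in> topspace (geom K)" if "f \<in> topspace (geom K')" for f
    using that K'eq by (auto simp: topspace_geom)
  have cr: "continuous_map (geom K) (geom K') r"
  proof (rule cont_geom[OF rK])
    fix y
    show "continuous_map (geom K) euclideanreal (\<lambda>f. r f y)"
      unfolding r_def by (auto intro!: continuous_map_add proj_cont)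
  qed
  have ci: "continuous_map (geom K') (geom K) id"
    by (rule cont_geom) (auto simp: K'K proj_cont)
  have h1: "homotopic_with (\<lambda>x. True) (geom K) (geom K) (id \<circ> r) id"
  proof (rule SL[OF dcK])
    show "continuous_map (geom K) (geom K) (id \<circ> r)" using continuous_map_compose[OF cr ci] .
    show "continuous_map (geom K) (geom K) id" by simp
    fix f assume f: "f \<in> topspace (geom K)"
    have sK: "{x. f x \<noteq> 0} \<in> K" by (rule geomD(3)[OF f])
    show "{y. (id \<circ> r) f y \<noteq> 0} \<union> {y. id f y \<noteq> 0} \<in> K"
    proof (cases "f v = 0")
      case True
      have "{y. (id \<circ> r) f y \<noteq> 0} \<union> {y. id f y \<noteq> 0} = {x. f x \<noteq> 0}"
        using True by (auto simp: r_def)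
      then show ?thesis using sK by simp
    next
      case False
      have "insert u {x. f x \<noteq> 0} \<in> K" using cone[OF sK] False by simp
      moreover have "{y. (id \<circ> r) f y \<noteq> 0} \<union> {y. id f y \<noteq> 0} \<subseteq> insert u {x. f x \<noteq> 0}"
        by (auto simp: r_def)
      ultimately show ?thesis by (rule dcD[OF dcK])
    qed
  qed
  have h2: "homotopic_with (\<lambda>x. True) (geom K') (geom K') (r \<circ> id) id"
  proof (rule homotopic_with_equal)
    show "continuous_map (geom K') (geom K') (r \<circ> id)" using continuous_map_compose[OF ci cr] .
    fix f assume f: "f \<in> topspace (geom K')"
    have "f v = 0" using geomD(3)[OF f] K'eq by auto
    then show "(r \<circ> id) f = id f" by (auto simp: r_def)
  qed auto
  show ?thesis unfolding htpy_eq_def homotopy_equivalent_space_def K_def[symmetric] K'_def[symmetric]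
    using cr ci h1 h2 by blast
qed

lemma sum3_cases:
  assumes "\<And>a. P (Inl a)" "\<And>a. P (Inr (Inl a))" "\<And>b. P (Inr (Inr b))"
  shows "P z"
  using assms by (metis sum.exhaust)

lemma sum3E:
  obtains (l) a where "z = Inl a" | (m) a where "z = Inr (Inl a)" | (r) b where "z = Inr (Inr b)"
  by (metis sum.exhaust)

lemma dc_image: "dc A \<Longrightarrow> dc ((image h) ` A)"
  unfolding dc_def
proof (intro ballI allI impI)
  fix F G assume dA: "\<forall>\<sigma>\<in>A. \<forall>\<tau>. \<tau> \<subseteq> \<sigma> \<longrightarrow> \<tau> \<in> A" and F: "F \<in> image h ` A" and G: "G \<subseteq> F"
  then obtain X where X: "X \<in> A" "F = h ` X" by blast
  have "G = h ` (X \<inter> h -` G)" using G X by blast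
  moreover have "X \<inter> h -` G \<in> A" using dA X(1) Int_lower1 by metis
  ultimately show "G \<in> image h ` A" by (metis imageI)
qed

lemma dc_Un: "dc A \<Longrightarrow> dc B \<Longrightarrow> dc (A \<union> B)"
  unfolding dc_def by blast

lemma dc_susp: assumes "dc L" shows "dc (susp L)"
  unfolding dc_def
proof (intro ballI allI impI)
  fix F G assume F: "F \<in> susp L" and G: "G \<subseteq> F"
  then obtain \<rho> T where X: "\<rho> \<in> L" "T \<noteq> UNIV" "F = Inl ` \<rho> \<union> Inr ` T"
    unfolding susp_def by blast
  have Gd: "G = Inl ` {a. Inl a \<in> G} \<union> Inr ` {b. Inr b \<in> G}"
  proof (rule set_eqI)
    fix z show "z \<in> G \<longleftrightarrow> z \<in> Inl ` {a. Inl a \<in> G} \<union> Inr ` {b. Inr b \<in> G}"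
      by (cases z) auto
  qed
  have "{a. Inl a \<in> G} \<subseteq> \<rho>" using G X(3) by auto
  then have l: "{a. Inl a \<in> G} \<in> L" using dcD[OF assms X(1)] by blast
  have "{b. Inr b \<in> G} \<subseteq> T" using G X(3) by auto
  then have r: "{b. Inr b \<in> G} \<noteq> UNIV" using X(2) by auto
  show "G \<in> susp L" unfolding susp_def using Gd l r by blast
qed

locale P2 =
  fixes V :: "'a set" and E :: "'a \<Rightarrow> 'a \<Rightarrow> bool" and d :: nat and u v :: 'a
  assumes sg: "simple_graph V E" and uV: "u \<in> V" and vV: "v \<in> V" and uv: "u \<noteq> v"
    and N: "open_nbhd V E v \<subseteq> open_nbhd V E u"
begin

definition "K = BI d V E"
definition "K' = BI d (V - {v}) (del_edges E v)"
definition "L = link K v"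
definition "W = wedge K' (susp L) u (Inr True)"
definition "WN \<rho> = insert (Inl u) (Inr ` Inl ` \<rho>)"
definition "WS \<rho> = insert (Inr (Inr False)) (Inr ` Inl ` \<rho>)"

lemmas sgf = sg_facts[OF sg]

lemma finV: "finite V" by (rule sgf(1))

lemma Keq: "K = {\<sigma>. \<sigma> \<subseteq> V \<and> good E d \<sigma>}" unfolding K_def by (rule BI_eq[OF finV])
lemma K'eq: "K' = {\<sigma> \<in> K. v \<notin> \<sigma>}" unfolding K'_def K_def by (rule BI_del[OF finV])
lemma dcK: "dc K" unfolding K_def by (rule dc_BI[OF finV])
lemma dcK': "dc K'" unfolding K'_def by (rule dc_BI) (use finV in simp)
lemma Leq: "L = {\<rho> \<in> K. v \<notin> \<rho> \<and> insert v \<rho> \<in> K}" by (simp add: L_def link_def)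
lemma dcL: "dc L" unfolding dc_def
proof (intro ballI allI impI)
  fix \<sigma> \<tau> assume s: "\<sigma> \<in> L" and t: "\<tau> \<subseteq> \<sigma>"
  have s1: "\<sigma> \<in> K" "v \<notin> \<sigma>" "insert v \<sigma> \<in> K" using s by (simp_all add: Leq)
  have "\<tau> \<in> K" by (rule dcD[OF dcK s1(1) t])
  moreover have "insert v \<tau> \<in> K" by (rule dcD[OF dcK s1(3)]) (use t in blast)
  moreover have "v \<notin> \<tau>" using t s1(2) by blast
  ultimately show "\<tau> \<in> L" by (simp add: Leq)
qed

lemma nEuv: "\<not> E u v"
  using N sgf(4,5) uV unfolding open_nbhd_def by blast
lemma Nv: "E v x \<Longrightarrow> E u x" using N sgf(3) unfolding open_nbhd_def by blast

lemma F1: assumes "\<rho> \<in> L" shows "insert u \<rho> \<in> K'"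
proof -
  have r: "\<rho> \<in> K" "v \<notin> \<rho>" "insert v \<rho> \<in> K" using assms Leq by auto
  have sV: "insert v \<rho> \<subseteq> V" and gs: "good E d (insert v \<rho>)" using r(3) Keq by auto
  have "good E d (insert u \<rho>)" unfolding good_def
  proof (intro allI impI)
    fix S assume S: "S \<subseteq> insert u \<rho>" and iS: "indep E S"
    have finS: "finite S" using S sV uV finV by (meson finite_insert finite_subset subset_insertI2)
    show "card S < d"
    proof (cases "u \<in> S")
      case False
      then have "S \<subseteq> insert v \<rho>" using S by blast
      then show ?thesis using iS gs unfolding good_def by blast
    next
      case True
      have vS: "v \<notin> S" using S r(2) uv by blast
      have nb: "\<not> E v x \<and> \<not> E x v" if "x \<in> S" "x \<noteq> u" for x
        using Nv[of x] sgf(4)[of x v] iS True that unfolding indep_def by blast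
      note ex = exch[OF iS True vS finS nb sgf(5)]
      have "insert v (S - {u}) \<subseteq> insert v \<rho>" using S by blast
      then have "card (insert v (S - {u})) < d" using ex(1) gs unfolding good_def by blast
      then show ?thesis using ex(2) by simp
    qed
  qed
  moreover have "insert u \<rho> \<subseteq> V" using sV uV by blast
  ultimately have "insert u \<rho> \<in> K" unfolding Keq by blast
  moreover have "v \<notin> insert u \<rho>" using uv r(2) by blast
  ultimately show ?thesis by (simp add: K'eq)
qed

lemma K'K: "\<sigma> \<in> K' \<Longrightarrow> \<sigma> \<in> K" by (simp add: K'eq)
lemma K'v: "\<sigma> \<in> K' \<Longrightarrow> v \<notin> \<sigma>" by (simp add: K'eq)
lemma KV: "\<sigma> \<in> K \<Longrightarrow> \<sigma> \<subseteq> V" by (simp add: Keq)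
lemma K'V: "\<sigma> \<in> K' \<Longrightarrow> \<sigma> \<subseteq> V - {v}" using K'K K'v KV by blast
lemma LK: "\<rho> \<in> L \<Longrightarrow> \<rho> \<in> K" by (simp add: Leq)
lemma Lv: "\<rho> \<in> L \<Longrightarrow> v \<notin> \<rho>" by (simp add: Leq)
lemma LV: "\<rho> \<in> L \<Longrightarrow> \<rho> \<subseteq> V - {v}" using LK Lv KV by blast
lemma F2: "\<rho> \<in> L \<Longrightarrow> insert v \<rho> \<in> K" by (simp add: Leq)
lemma F4: assumes "\<sigma> \<in> K" "v \<in> \<sigma>" shows "\<sigma> - {v} \<in> L"
proof -
  have "\<sigma> - {v} \<in> K" using dcD[OF dcK assms(1)] by blast
  moreover have "insert v (\<sigma> - {v}) = \<sigma>" using assms by blast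
  ultimately show ?thesis using Leq assms by auto
qed
lemma F5: "\<sigma> \<in> K \<Longrightarrow> v \<notin> \<sigma> \<Longrightarrow> \<sigma> \<in> K'" using K'eq by blast

lemma dcW: "dc W"
  unfolding W_def wedge_def by (intro dc_Un dc_image dcK' dc_susp dcL)

lemma W_Inl: "\<sigma> \<in> K' \<Longrightarrow> Inl ` \<sigma> \<in> W"
  unfolding W_def wedge_def by blast

lemma W_N: assumes "\<rho> \<in> L" shows "WN \<rho> \<in> W"
proof -
  have "Inl ` \<rho> \<union> Inr ` {True} \<in> susp L" using assms unfolding susp_def by blast
  moreover have "WN \<rho> = (\<lambda>y. if y = Inr True then Inl u else Inr y) ` (Inl ` \<rho> \<union> Inr ` {True})"
    unfolding WN_def by auto
  ultimately show ?thesis unfolding W_def wedge_def by blast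
qed

lemma W_S: assumes "\<rho> \<in> L" shows "WS \<rho> \<in> W"
proof -
  have "Inl ` \<rho> \<union> Inr ` {False} \<in> susp L" using assms unfolding susp_def by blast
  moreover have "WS \<rho> = (\<lambda>y. if y = Inr True then Inl u else Inr y) ` (Inl ` \<rho> \<union> Inr ` {False})"
    unfolding WS_def by auto
  ultimately show ?thesis unfolding W_def wedge_def by blast
qed

lemma Wcases:
  assumes "F \<in> W"
  obtains (I) \<sigma> where "\<sigma> \<in> K'" "F \<subseteq> Inl ` \<sigma>"
    | (N) \<rho> where "\<rho> \<in> L" "F \<subseteq> WN \<rho>"
    | (S) \<rho> where "\<rho> \<in> L" "F \<subseteq> WS \<rho>"
proof -
  consider (a) \<sigma> where "\<sigma> \<in> K'" "F = Inl ` \<sigma>"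
    | (b) X where "X \<in> susp L" "F = (\<lambda>y. if y = Inr True then Inl u else Inr y) ` X"
    using assms unfolding W_def wedge_def by blast
  then show ?thesis
  proof cases
    case a then show ?thesis using I by blast
  next
    case b
    then obtain \<rho> T where X: "\<rho> \<in> L" "T \<noteq> UNIV" "X = Inl ` \<rho> \<union> Inr ` T"
      unfolding susp_def by blast
    have "T \<subseteq> {True} \<or> T \<subseteq> {False}"
    proof (rule ccontr)
      assume "\<not> (T \<subseteq> {True} \<or> T \<subseteq> {False})"
      then have tf: "True \<in> T" "False \<in> T" by auto
      have "T = UNIV"
      proof
        show "UNIV \<subseteq> T"
        proof
          fix x :: bool show "x \<in> T" using tf by (cases x) auto
        qed
      qed simp
      then show False using X(2) by blast
    qed
    then show ?thesis
    proof
      assume "T \<subseteq> {True}"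
      then have "F \<subseteq> WN \<rho>"
      proof (intro subsetI)
        fix z assume T: "T \<subseteq> {True}" and z: "z \<in> F"
        then obtain y where y: "y \<in> X" "z = (if y = Inr True then Inl u else Inr y)" using b(2) by blast
        from y(1) X(3) consider (l) a where "a \<in> \<rho>" "y = Inl a" | (r) c where "c \<in> T" "y = Inr c" by blast
        then show "z \<in> WN \<rho>"
        proof cases
          case l then show ?thesis using y(2) by (simp add: WN_def)
        next
          case r then have "c = True" using T by blast
          then show ?thesis using y(2) r by (simp add: WN_def)
        qed
      qed
      then show ?thesis using N X(1) by blast
    next
      assume "T \<subseteq> {False}"
      then have "F \<subseteq> WS \<rho>"
      proof (intro subsetI)
        fix z assume T: "T \<subseteq> {False}" and z: "z \<in> F"
        then obtain y where y: "y \<in> X" "z = (if y = Inr True then Inl u else Inr y)" using b(2) by blast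
        from y(1) X(3) consider (l) a where "a \<in> \<rho>" "y = Inl a" | (r) c where "c \<in> T" "y = Inr c" by blast
        then show "z \<in> WS \<rho>"
        proof cases
          case l then show ?thesis using y(2) by (simp add: WS_def)
        next
          case r then have "c = False" using T by blast
          then show ?thesis using y(2) r by (simp add: WS_def)
        qed
      qed
      then show ?thesis using S X(1) by blast
    qed
  qed
qed

definition "FW = Inl ` V \<union> Inr ` Inl ` V \<union> {Inr (Inr False)}"

lemma finFW: "finite FW" using finV by (simp add: FW_def)

lemma W_FW: assumes "F \<in> W" shows "F \<subseteq> FW"
  using assms
proof (cases rule: Wcases)
  case (I \<sigma>) then show ?thesis using K'V[OF I(1)] unfolding FW_def by blast
next
  case (N \<rho>) then show ?thesis using LV[OF N(1)] uV unfolding FW_def WN_def by blast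
next
  case (S \<rho>) then show ?thesis using LV[OF S(1)] unfolding FW_def WS_def by blast
qed

lemma W_nv0: assumes "F \<in> W" shows "Inl v \<notin> F \<and> Inr (Inl v) \<notin> F \<and> Inr (Inr True) \<notin> F"
  using assms
proof (cases rule: Wcases)
  case (I \<sigma>) then show ?thesis using K'V[OF I(1)] by blast
next
  case (N \<rho>) then show ?thesis using LV[OF N(1)] uv unfolding WN_def by blast
next
  case (S \<rho>) then show ?thesis using LV[OF S(1)] unfolding WS_def by blast
qed

lemma W_nv: assumes "F \<in> W" shows "Inl v \<notin> F" "Inr (Inl v) \<notin> F" "Inr (Inr True) \<notin> F"
  using W_nv0[OF assms] by blast+

lemma sumFW:
  "sum g FW = sum (\<lambda>a. g (Inl a)) V + sum (\<lambda>a. g (Inr (Inl a))) V + g (Inr (Inr False))"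
proof -
  have d1: "Inl ` V \<inter> (Inr ` Inl ` V \<union> {Inr (Inr False)}) = {}" by auto
  have d2: "Inr ` Inl ` V \<inter> {Inr (Inr False)} = {}" by auto
  have "sum g FW = sum g (Inl ` V) + sum g (Inr ` Inl ` V \<union> {Inr (Inr False)})"
    unfolding FW_def Un_assoc by (rule sum.union_disjoint) (use finV d1 in auto)
  also have "sum g (Inr ` Inl ` V \<union> {Inr (Inr False)}) = sum g (Inr ` Inl ` V) + g (Inr (Inr False))"
    by (subst sum.union_disjoint) (use finV d2 in auto)
  also have "sum g (Inl ` V) = sum (\<lambda>a. g (Inl a)) V" by (simp add: sum.reindex)
  also have "sum g (Inr ` Inl ` V) = sum (\<lambda>a. g (Inr (Inl a))) V"
    by (simp add: sum.reindex image_image inj_on_def)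
  finally show ?thesis by (simp add: add.assoc)
qed

end

definition "cA (t::real) = max 0 (1 - 3*t) / max (1 - t) (1/3)"
definition "cB (t::real) = max 0 (min (3*t) (2 - 3*t))"
definition "cC (t::real) = min 3 (max 0 (3*t - 1) / max (1 - t) (1/3))"
definition "cD (t::real) = max 0 (3*t - 2)"
definition "cM (t::real) = min 1 (max 0 (2 - 3*t))"
definition "nrm (t::real) = 1 / max (1 - t) (1/3)"

lemma den_pos: "max (1 - t) (1/3::real) > 0" by simp

lemma nonneg: "cA t \<ge> 0" "cB t \<ge> 0" "cC t \<ge> 0" "cD t \<ge> 0" "cM t \<ge> 0" "nrm t > 0"
  unfolding cA_def cB_def cC_def cD_def cM_def nrm_def by auto

lemma reg1: "0 \<le> t \<Longrightarrow> t \<le> 1/3 \<Longrightarrow> cC t = 0 \<and> cD t = 0 \<and> cM t = 1 \<and> cB t = 3*t \<and> cA t * (1 - t) = 1 - 3*t"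
  unfolding cA_def cB_def cC_def cD_def cM_def by (auto simp: max_def min_def field_simps)

lemma reg2: "1/3 < t \<Longrightarrow> t \<le> 2/3 \<Longrightarrow> cA t = 0 \<and> cD t = 0 \<and> cB t = 2 - 3*t \<and> cM t = 2 - 3*t \<and> cC t * (1 - t) = 3*t - 1"
  unfolding cA_def cB_def cC_def cD_def cM_def by (auto simp: max_def min_def field_simps)

lemma reg3: "2/3 < t \<Longrightarrow> cA t = 0 \<and> cB t = 0 \<and> cM t = 0 \<and> cC t = 3 \<and> cD t = 3*t - 2"
  unfolding cA_def cB_def cC_def cD_def cM_def by (auto simp: max_def min_def field_simps)

lemma reg0: "cA 0 = 1" "cB 0 = 0" "cC 0 = 0" "cD 0 = 0" "cM 0 = 1" "nrm 0 = 1"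
  unfolding cA_def cB_def cC_def cD_def cM_def nrm_def by auto

lemma nrm_lo: "t \<le> 2/3 \<Longrightarrow> (1 - t) * nrm t = 1"
  unfolding nrm_def by (auto simp: max_def field_simps)
lemma nrm_hi: "2/3 < t \<Longrightarrow> nrm t = 3"
  unfolding nrm_def by (auto simp: max_def field_simps)

lemma cB_t0: "cB t \<noteq> 0 \<Longrightarrow> t > 0" unfolding cB_def by (auto simp: max_def min_def split: if_split_asm)
lemma cD_pos: "cD t \<noteq> 0 \<Longrightarrow> t > 2/3" unfolding cD_def by (auto simp: max_def split: if_split_asm)
lemma cM_pos: "cM t \<noteq> 0 \<Longrightarrow> t < 2/3" unfolding cM_def by (auto simp: max_def min_def split: if_split_asm)
lemma cB_lt: "cB t \<noteq> 0 \<Longrightarrow> t < 2/3" unfolding cB_def by (auto simp: max_def min_def split: if_split_asm)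
lemma cA_pos: "cA t \<noteq> 0 \<Longrightarrow> t < 1/3" unfolding cA_def by (auto simp: max_def split: if_split_asm)
lemma cC_pos: "cC t \<noteq> 0 \<Longrightarrow> t > 1/3" unfolding cC_def by (cases "3*t \<le> 1") (auto simp: max_def min_def split: if_split_asm)

lemma num_Phi: assumes "0 \<le> t" "t \<le> 1"
  shows "cA t * (1 - t) + cB t + cC t * (1 - t) + cD t = 1"
proof -
  consider "t \<le> 1/3" | "1/3 < t" "t \<le> 2/3" | "2/3 < t" by linarith
  then show ?thesis
  proof cases
    case 1 then show ?thesis using reg1[OF assms(1) 1] by simp
  next
    case 2 then show ?thesis using reg2[OF 2] by simp
  next
    case 3 then show ?thesis using reg3[OF 3] by simp
  qed
qed

lemma num_GK: assumes "0 \<le> t" "t \<le> 1" shows "cD t + (1 - t) * nrm t = 1"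
proof (cases "t \<le> 2/3")
  case True then show ?thesis using nrm_lo[OF True] reg1[OF assms(1)] reg2 by (cases "t \<le> 1/3") auto
next
  case False then show ?thesis using nrm_hi reg3 by simp
qed

lemma num_G1: assumes "0 \<le> t" "t \<le> 1" shows "cM t + cC t * (1 - t) + cD t = 1"
proof -
  consider "t \<le> 1/3" | "1/3 < t" "t \<le> 2/3" | "2/3 < t" by linarith
  then show ?thesis
  proof cases
    case 1 then show ?thesis using reg1[OF assms(1) 1] by simp
  next
    case 2 then show ?thesis using reg2[OF 2] by simp
  next
    case 3 then show ?thesis using reg3[OF 3] by simp
  qed
qed

lemma cont_num:
  assumes h: "continuous_map X euclideanreal h"
  shows "continuous_map X euclideanreal (\<lambda>x. cA (h x))"
    "continuous_map X euclideanreal (\<lambda>x. cB (h x))"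
    "continuous_map X euclideanreal (\<lambda>x. cC (h x))"
    "continuous_map X euclideanreal (\<lambda>x. cD (h x))"
    "continuous_map X euclideanreal (\<lambda>x. cM (h x))"
    "continuous_map X euclideanreal (\<lambda>x. nrm (h x))"
proof -
  have c: "continuous_map X euclideanreal (\<lambda>x. c)" for c :: real by simp
  have l: "continuous_map X euclideanreal (\<lambda>x. a - b * h x)" for a b :: real
    by (intro continuous_map_diff c continuous_map_real_mult h)
  have l2: "continuous_map X euclideanreal (\<lambda>x. b * h x - a)" for a b :: real
    by (intro continuous_map_diff c continuous_map_real_mult h)
  have den: "continuous_map X euclideanreal (\<lambda>x. max (1 - h x) (1/3))"
    using continuous_map_real_max[OF l[of 1 1] c] by simp
  show "continuous_map X euclideanreal (\<lambda>x. cA (h x))" unfolding cA_def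
    by (intro continuous_map_real_divide continuous_map_real_max c l den) simp
  show "continuous_map X euclideanreal (\<lambda>x. cB (h x))" unfolding cB_def
    using continuous_map_real_max[OF c continuous_map_real_min[OF l[of 0 "-3"] l[of 2 3]]] by simp
  show "continuous_map X euclideanreal (\<lambda>x. cC (h x))" unfolding cC_def
    by (intro continuous_map_real_min continuous_map_real_divide continuous_map_real_max c l2 den) simp
  show "continuous_map X euclideanreal (\<lambda>x. cD (h x))" unfolding cD_def
    by (intro continuous_map_real_max c l2)
  show "continuous_map X euclideanreal (\<lambda>x. cM (h x))" unfolding cM_def
    by (intro continuous_map_real_min continuous_map_real_max c l)
  show "continuous_map X euclideanreal (\<lambda>x. nrm (h x))" unfolding nrm_def
    by (intro continuous_map_real_divide c den) simp
qed

context P2 begin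

definition Phi :: "('a \<Rightarrow> real) \<Rightarrow> ('a + ('a + bool) \<Rightarrow> real)" where
 "Phi f = (\<lambda>z. case z of Inl a \<Rightarrow> (if a = v then 0 else cA (f v) * f a) + (if a = u then cB (f v) else 0)
     | Inr (Inl a) \<Rightarrow> (if a = v then 0 else cC (f v) * f a)
     | Inr (Inr b) \<Rightarrow> (if b then 0 else cD (f v)))"

lemma Phi_simps [simp]:
  "Phi f (Inl a) = (if a = v then 0 else cA (f v) * f a) + (if a = u then cB (f v) else 0)"
  "Phi f (Inr (Inl a)) = (if a = v then 0 else cC (f v) * f a)"
  "Phi f (Inr (Inr b)) = (if b then 0 else cD (f v))"
  by (simp_all add: Phi_def)

definition Psi :: "('a + ('a + bool) \<Rightarrow> real) \<Rightarrow> ('a \<Rightarrow> real)" where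
  "Psi g = (\<lambda>a. g (Inl a) + g (Inr (Inl a)) + (if a = v then g (Inr (Inr False)) else 0))"

definition GK :: "('a \<Rightarrow> real) \<Rightarrow> ('a \<Rightarrow> real)" where
  "GK f = (\<lambda>a. if a = v then cD (f v) else f a * nrm (f v))"

lemma Kpt:
  assumes f: "f \<in> topspace (geom K)"
  shows "\<And>x. 0 \<le> f x" "{x. f x \<noteq> 0} \<in> K" "{x. f x \<noteq> 0} \<subseteq> V" "sum f V = 1"
    "0 \<le> f v" "f v \<le> 1"
    "\<And>c. sum (\<lambda>a. if a = v then 0 else c * f a) V = c * (1 - f v)"
proof -
  show nn: "\<And>x. 0 \<le> f x" and sK: "{x. f x \<noteq> 0} \<in> K" using geomD[OF f] by auto
  show sV: "{x. f x \<noteq> 0} \<subseteq> V" using KV[OF sK] .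
  show s1: "sum f V = 1" using geomD(4)[OF f finV sV] .
  show "0 \<le> f v" using nn .
  show "f v \<le> 1" using member_le_sum[of v V f] nn vV finV s1 by simp
  fix c
  have "sum (\<lambda>a. if a = v then 0 else c * f a) V = sum (\<lambda>a. if a = v then 0 else c * f a) (V - {v})"
    by (rule sum.mono_neutral_right) (use finV in auto)
  also have "\<dots> = sum (\<lambda>a. c * f a) (V - {v})" by (rule sum.cong) auto
  also have "\<dots> = c * (sum f V - f v)" using finV vV by (simp add: sum_distrib_left[symmetric] sum_diff1)
  finally show "sum (\<lambda>a. if a = v then 0 else c * f a) V = c * (1 - f v)" using s1 by simp
qed

lemma Kcases:
  assumes f: "f \<in> topspace (geom K)"
  obtains (zero) "f v = 0" "{x. f x \<noteq> 0} \<in> K'"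
    | (pos) "f v > 0" "{x. f x \<noteq> 0} - {v} \<in> L"
proof (cases "f v = 0")
  case True
  then show ?thesis using zero F5[OF Kpt(2)[OF f]] by simp
next
  case False
  then have "f v > 0" using Kpt(5)[OF f] by simp
  moreover have "{x. f x \<noteq> 0} - {v} \<in> L" using F4[OF Kpt(2)[OF f]] False by simp
  ultimately show ?thesis using pos by blast
qed

lemma Phi_supp:
  assumes "Phi f z \<noteq> 0"
  shows "(\<exists>a. z = Inl a \<and> a \<noteq> v \<and> cA (f v) \<noteq> 0 \<and> f a \<noteq> 0) \<or> (z = Inl u \<and> cB (f v) \<noteq> 0)
    \<or> (\<exists>a. z = Inr (Inl a) \<and> a \<noteq> v \<and> cC (f v) \<noteq> 0 \<and> f a \<noteq> 0) \<or> (z = Inr (Inr False) \<and> cD (f v) \<noteq> 0)"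
proof (cases z rule: sum3E)
  case (l a) then show ?thesis using assms by (cases "a = v"; cases "a = u") auto
next
  case (m a) then show ?thesis using assms by (cases "a = v") auto
next
  case (r b) then show ?thesis using assms by (cases b) auto
qed

lemma Phi_in:
  assumes f: "f \<in> topspace (geom K)"
  shows "Phi f \<in> topspace (geom W)"
proof -
  define t where "t = f v"
  note kp = Kpt[OF f]
  have t01: "0 \<le> t" "t \<le> 1" using kp(5,6) t_def by auto
  have supp: "(\<exists>a. z = Inl a \<and> a \<noteq> v \<and> cA t \<noteq> 0 \<and> f a \<noteq> 0) \<or> (z = Inl u \<and> cB t \<noteq> 0)
    \<or> (\<exists>a. z = Inr (Inl a) \<and> a \<noteq> v \<and> cC t \<noteq> 0 \<and> f a \<noteq> 0) \<or> (z = Inr (Inr False) \<and> cD t \<noteq> 0)"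
    if "Phi f z \<noteq> 0" for z using Phi_supp[OF that] t_def by simp
  obtain F where F: "F \<in> W" "{z. Phi f z \<noteq> 0} \<subseteq> F"
  proof (rule Kcases[OF f])
    assume zero: "f v = 0" "{x. f x \<noteq> 0} \<in> K'"
    have "{z. Phi f z \<noteq> 0} \<subseteq> Inl ` {x. f x \<noteq> 0}"
      using supp zero(1) reg0 t_def by fastforce
    then show ?thesis using that W_Inl[OF zero(2)] by blast
  next
    assume pos: "f v > 0" "{x. f x \<noteq> 0} - {v} \<in> L"
    define \<rho> where "\<rho> = {x. f x \<noteq> 0} - {v}"
    have rL: "\<rho> \<in> L" using pos \<rho>_def by simp
    consider "t \<le> 1/3" | "1/3 < t" "t \<le> 2/3" | "2/3 < t" by linarith
    then show ?thesis
    proof cases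
      case 1
      have "{z. Phi f z \<noteq> 0} \<subseteq> Inl ` insert u \<rho>"
        using supp reg1[OF t01(1) 1] unfolding \<rho>_def by fastforce
      then show ?thesis using that W_Inl[OF F1[OF rL]] by blast
    next
      case 2
      have "{z. Phi f z \<noteq> 0} \<subseteq> WN \<rho>"
        using supp reg2[OF 2] unfolding \<rho>_def WN_def by fastforce
      then show ?thesis using that W_N[OF rL] by blast
    next
      case 3
      have "{z. Phi f z \<noteq> 0} \<subseteq> WS \<rho>"
        using supp reg3[OF 3] unfolding \<rho>_def WS_def by fastforce
      then show ?thesis using that W_S[OF rL] by blast
    qed
  qed
  show ?thesis
  proof (rule geomI[OF dcW _ finFW _ F(1) F(2)])
    show "0 \<le> Phi f z" for z
      using kp(1) nonneg by (cases z rule: sum3E) (auto simp: t_def)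
    show "{z. Phi f z \<noteq> 0} \<subseteq> FW" using F W_FW by blast
    have s1: "sum (\<lambda>a. Phi f (Inl a)) V = cA t * (1 - t) + cB t"
    proof -
      have "sum (\<lambda>a. Phi f (Inl a)) V = sum (\<lambda>a. if a = v then 0 else cA t * f a) V + sum (\<lambda>a. if a = u then cB t else 0) V"
        unfolding t_def by (simp add: sum.distrib)
      also have "\<dots> = cA t * (1 - t) + cB t" using kp(7) uV finV t_def by simp
      finally show ?thesis .
    qed
    have s2: "sum (\<lambda>a. Phi f (Inr (Inl a))) V = cC t * (1 - t)"
      using kp(7) t_def by simp
    show "sum (Phi f) FW = 1"
      unfolding sumFW s1 s2 using num_Phi[OF t01] by (simp add: t_def)
  qed
qed

lemma Wpt:
  assumes g: "g \<in> topspace (geom W)"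
  shows "\<And>x. 0 \<le> g x" "{x. g x \<noteq> 0} \<in> W" "g (Inl v) = 0" "g (Inr (Inl v)) = 0" "g (Inr (Inr True)) = 0"
    "sum (\<lambda>a. g (Inl a)) V + sum (\<lambda>a. g (Inr (Inl a))) V + g (Inr (Inr False)) = 1"
    "sum g FW = 1"
proof -
  show nn: "\<And>x. 0 \<le> g x" and sW: "{x. g x \<noteq> 0} \<in> W" using geomD[OF g] by auto
  show "g (Inl v) = 0" "g (Inr (Inl v)) = 0" "g (Inr (Inr True)) = 0" using W_nv[OF sW] by auto
  show "sum g FW = 1" using geomD(4)[OF g finFW W_FW[OF sW]] .
  then show "sum (\<lambda>a. g (Inl a)) V + sum (\<lambda>a. g (Inr (Inl a))) V + g (Inr (Inr False)) = 1"
    by (simp add: sumFW)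
qed

lemma Psi_in:
  assumes g: "g \<in> topspace (geom W)"
  shows "Psi g \<in> topspace (geom K)"
proof -
  note wp = Wpt[OF g]
  obtain F where F: "F \<in> K" "{a. Psi g a \<noteq> 0} \<subseteq> F"
  proof (rule Wcases[OF wp(2)])
    fix \<sigma> assume s: "\<sigma> \<in> K'" "{x. g x \<noteq> 0} \<subseteq> Inl ` \<sigma>"
    have "{a. Psi g a \<noteq> 0} \<subseteq> \<sigma>"
    proof
      fix a assume "a \<in> {a. Psi g a \<noteq> 0}"
      then have "g (Inl a) \<noteq> 0 \<or> g (Inr (Inl a)) \<noteq> 0 \<or> g (Inr (Inr False)) \<noteq> 0"
        by (auto simp: Psi_def split: if_splits)
      then show "a \<in> \<sigma>" using s(2) by blast
    qed
    then show ?thesis using that K'K[OF s(1)] by blast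
  next
    fix \<rho> assume r: "\<rho> \<in> L" "{x. g x \<noteq> 0} \<subseteq> WN \<rho>"
    have "{a. Psi g a \<noteq> 0} \<subseteq> insert u \<rho>"
    proof
      fix a assume "a \<in> {a. Psi g a \<noteq> 0}"
      then have "g (Inl a) \<noteq> 0 \<or> g (Inr (Inl a)) \<noteq> 0 \<or> g (Inr (Inr False)) \<noteq> 0"
        by (auto simp: Psi_def split: if_splits)
      then show "a \<in> insert u \<rho>" using r(2) unfolding WN_def by blast
    qed
    then show ?thesis using that K'K[OF F1[OF r(1)]] by blast
  next
    fix \<rho> assume r: "\<rho> \<in> L" "{x. g x \<noteq> 0} \<subseteq> WS \<rho>"
    have "{a. Psi g a \<noteq> 0} \<subseteq> insert v \<rho>"
    proof
      fix a assume "a \<in> {a. Psi g a \<noteq> 0}"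
      then have "g (Inl a) \<noteq> 0 \<or> g (Inr (Inl a)) \<noteq> 0 \<or> (a = v \<and> g (Inr (Inr False)) \<noteq> 0)"
        by (auto simp: Psi_def split: if_splits)
      then show "a \<in> insert v \<rho>" using r(2) unfolding WS_def by blast
    qed
    then show ?thesis using that F2[OF r(1)] by blast
  qed
  show ?thesis
  proof (rule geomI[OF dcK _ finV _ F(1) F(2)])
    show "0 \<le> Psi g a" for a using wp(1) by (simp add: Psi_def)
    show "{a. Psi g a \<noteq> 0} \<subseteq> V" using KV[OF F(1)] F(2) by blast
    have "sum (Psi g) V = sum (\<lambda>a. g (Inl a)) V + sum (\<lambda>a. g (Inr (Inl a))) V
        + sum (\<lambda>a. if a = v then g (Inr (Inr False)) else 0) V"
      by (simp add: Psi_def sum.distrib)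
    also have "sum (\<lambda>a. if a = v then g (Inr (Inr False)) else 0) V = g (Inr (Inr False))"
      using finV vV by simp
    finally show "sum (Psi g) V = 1" using wp(6) by simp
  qed
qed

lemma GK_in:
  assumes f: "f \<in> topspace (geom K)"
  shows "GK f \<in> topspace (geom K)"
proof -
  note kp = Kpt[OF f]
  have sub: "{a. GK f a \<noteq> 0} \<subseteq> {x. f x \<noteq> 0}"
  proof
    fix a assume "a \<in> {a. GK f a \<noteq> 0}"
    then have "(a = v \<and> cD (f v) \<noteq> 0) \<or> (a \<noteq> v \<and> f a \<noteq> 0)" by (auto simp: GK_def split: if_splits)
    then show "a \<in> {x. f x \<noteq> 0}" using cD_pos by force
  qed
  show ?thesis
  proof (rule geomI[OF dcK _ finV _ kp(2) sub])
    show "0 \<le> GK f a" for a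
      using kp(1)[of a] nonneg(4)[of "f v"] nonneg(6)[of "f v"] by (simp add: GK_def)
    show "{a. GK f a \<noteq> 0} \<subseteq> V" using sub kp(3) by blast
    have "sum (GK f) V = cD (f v) + sum (\<lambda>a. if a = v then 0 else nrm (f v) * f a) V"
    proof -
      have "sum (GK f) V = sum (\<lambda>a. if a = v then cD (f v) else 0) V + sum (\<lambda>a. if a = v then 0 else nrm (f v) * f a) V"
        unfolding sum.distrib[symmetric] by (rule sum.cong) (auto simp: GK_def)
      then show ?thesis using finV vV by simp
    qed
    also have "\<dots> = 1" using kp(7) num_GK[OF kp(5,6)] by (simp add: mult.commute)
    finally show "sum (GK f) V = 1" .
  qed
qed

lemma cont_Phi: "continuous_map (geom K) (geom W) Phi"
proof (rule cont_geom[OF Phi_in])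
  fix z :: "'a + ('a + bool)"
  have p: "continuous_map (geom K) euclideanreal (\<lambda>f. f x)" for x by (rule proj_cont)
  show "continuous_map (geom K) euclideanreal (\<lambda>f. Phi f z)"
  proof (cases z rule: sum3E)
    case (l a) then show ?thesis
      using uv by (cases "a = v"; cases "a = u") (simp_all add: continuous_map_add continuous_map_real_mult cont_num p)
  next
    case (m a) then show ?thesis
      by (cases "a = v") (simp_all add: continuous_map_real_mult cont_num p)
  next
    case (r b) then show ?thesis by (cases b) (simp_all add: cont_num p)
  qed
qed

lemma cont_Psi: "continuous_map (geom W) (geom K) Psi"
proof (rule cont_geom[OF Psi_in])
  fix a :: 'a
  have p: "continuous_map (geom W) euclideanreal (\<lambda>f. f x)" for x by (rule proj_cont)
  show "continuous_map (geom W) euclideanreal (\<lambda>g. Psi g a)"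
    unfolding Psi_def by (cases "a = v") (simp_all add: continuous_map_add p)
qed

lemma cont_GK: "continuous_map (geom K) (geom K) GK"
proof (rule cont_geom[OF GK_in])
  fix a :: 'a
  have p: "continuous_map (geom K) euclideanreal (\<lambda>f. f x)" for x by (rule proj_cont)
  show "continuous_map (geom K) euclideanreal (\<lambda>f. GK f a)"
    unfolding GK_def by (cases "a = v") (simp_all add: continuous_map_real_mult cont_num p)
qed

lemma hK: "homotopic_with (\<lambda>x. True) (geom K) (geom K) (Psi \<circ> Phi) id"
proof -
  have c1: "continuous_map (geom K) (geom K) (Psi \<circ> Phi)"
    by (rule continuous_map_compose[OF cont_Phi cont_Psi])
  have h1: "homotopic_with (\<lambda>x. True) (geom K) (geom K) (Psi \<circ> Phi) GK"
  proof (rule SL[OF dcK c1 cont_GK])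
    fix f assume f: "f \<in> topspace (geom K)"
    have PP: "(Psi \<circ> Phi) f a \<noteq> 0 \<Longrightarrow> (a \<noteq> v \<and> f a \<noteq> 0) \<or> (a = u \<and> cB (f v) \<noteq> 0) \<or> (a = v \<and> cD (f v) \<noteq> 0)" for a
      using uv by (auto simp: Psi_def split: if_splits)
    have GG: "GK f a \<noteq> 0 \<Longrightarrow> (a \<noteq> v \<and> f a \<noteq> 0) \<or> (a = v \<and> cD (f v) \<noteq> 0)" for a
      by (auto simp: GK_def split: if_splits)
    obtain F where F: "F \<in> K" "{y. (Psi \<circ> Phi) f y \<noteq> 0} \<union> {y. GK f y \<noteq> 0} \<subseteq> F"
    proof (rule Kcases[OF f])
      assume z: "f v = 0" "{x. f x \<noteq> 0} \<in> K'"
      have "{y. (Psi \<circ> Phi) f y \<noteq> 0} \<union> {y. GK f y \<noteq> 0} \<subseteq> {x. f x \<noteq> 0}"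
        using PP GG z(1) reg0 by auto
      then show ?thesis using that Kpt(2)[OF f] by blast
    next
      assume p: "f v > 0" "{x. f x \<noteq> 0} - {v} \<in> L"
      show ?thesis
      proof (cases "f v \<le> 2/3")
        case True
        then have "cD (f v) = 0" using cD_pos by force
        then have "{y. (Psi \<circ> Phi) f y \<noteq> 0} \<union> {y. GK f y \<noteq> 0} \<subseteq> insert u ({x. f x \<noteq> 0} - {v})"
          using PP GG by blast
        then show ?thesis using that K'K[OF F1[OF p(2)]] by blast
      next
        case False
        then have "cB (f v) = 0" using cB_lt by force
        then have "{y. (Psi \<circ> Phi) f y \<noteq> 0} \<union> {y. GK f y \<noteq> 0} \<subseteq> {x. f x \<noteq> 0}"
          using PP GG p(1) by fastforce
        then show ?thesis using that Kpt(2)[OF f] by blast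
      qed
    qed
    then show "{y. (Psi \<circ> Phi) f y \<noteq> 0} \<union> {y. GK f y \<noteq> 0} \<in> K" using dcD[OF dcK] by blast
  qed
  have h2: "homotopic_with (\<lambda>x. True) (geom K) (geom K) GK id"
  proof (rule SL[OF dcK cont_GK])
    show "continuous_map (geom K) (geom K) id" by simp
    fix f assume f: "f \<in> topspace (geom K)"
    have "{y. GK f y \<noteq> 0} \<union> {y. id f y \<noteq> 0} \<subseteq> {x. f x \<noteq> 0}"
      using cD_pos Kpt(5)[OF f] by (fastforce simp: GK_def split: if_splits)
    then show "{y. GK f y \<noteq> 0} \<union> {y. id f y \<noteq> 0} \<in> K" using dcD[OF dcK Kpt(2)[OF f]] by blast
  qed
  show ?thesis by (rule homotopic_with_trans[OF h1 h2])
qed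

definition "pW g = sum (\<lambda>a. g (Inr (Inl a))) V"

definition G1 :: "('a + ('a + bool) \<Rightarrow> real) \<Rightarrow> ('a + ('a + bool) \<Rightarrow> real)" where
 "G1 g = (\<lambda>z. case z of Inl a \<Rightarrow> (if a = u then (g (Inl u) + pW g + g (Inr (Inr False))) * cM (g (Inr (Inr False))) else g (Inl a))
     | Inr (Inl a) \<Rightarrow> cC (g (Inr (Inr False))) * g (Inr (Inl a))
     | Inr (Inr b) \<Rightarrow> (if b then 0 else cD (g (Inr (Inr False)))))"

definition G2 :: "('a + ('a + bool) \<Rightarrow> real) \<Rightarrow> ('a + ('a + bool) \<Rightarrow> real)" where
 "G2 g = (\<lambda>z. case z of Inl a \<Rightarrow> g (Inl a)
     | Inr (Inl a) \<Rightarrow> nrm (g (Inr (Inr False))) * g (Inr (Inl a))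
     | Inr (Inr b) \<Rightarrow> (if b then 0 else cD (g (Inr (Inr False)))))"

lemma G1_simps [simp]:
  "G1 g (Inl a) = (if a = u then (g (Inl u) + pW g + g (Inr (Inr False))) * cM (g (Inr (Inr False))) else g (Inl a))"
  "G1 g (Inr (Inl a)) = cC (g (Inr (Inr False))) * g (Inr (Inl a))"
  "G1 g (Inr (Inr b)) = (if b then 0 else cD (g (Inr (Inr False))))"
  by (simp_all add: G1_def)

lemma G2_simps [simp]:
  "G2 g (Inl a) = g (Inl a)"
  "G2 g (Inr (Inl a)) = nrm (g (Inr (Inr False))) * g (Inr (Inl a))"
  "G2 g (Inr (Inr b)) = (if b then 0 else cD (g (Inr (Inr False))))"
  by (simp_all add: G2_def)

lemma Psi_v: assumes "g \<in> topspace (geom W)" shows "Psi g v = g (Inr (Inr False))"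
  using Wpt(3,4)[OF assms] by (simp add: Psi_def)

lemma caseI:
  assumes g: "g \<in> topspace (geom W)" and s: "\<sigma> \<in> K'" "{x. g x \<noteq> 0} \<subseteq> Inl ` \<sigma>"
  shows "Phi (Psi g) = g" "G1 g = g" "G2 g = g"
proof -
  note wp = Wpt[OF g]
  have z: "g (Inr y) = 0" for y using s(2) by blast
  have pv: "Psi g v = 0" using Psi_v[OF g] z by simp
  have ps: "Psi g a = g (Inl a)" for a using z by (simp add: Psi_def)
  have p0: "pW g = 0" using z by (simp add: pW_def)
  show "Phi (Psi g) = g"
  proof
    fix x show "Phi (Psi g) x = g x"
      by (cases x rule: sum3E) (use pv ps reg0 z wp(3) uv in auto)
  qed
  show "G1 g = g"
  proof
    fix x show "G1 g x = g x"
      by (cases x rule: sum3E) (use p0 reg0 z in auto)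
  qed
  show "G2 g = g"
  proof
    fix x show "G2 g x = g x"
      by (cases x rule: sum3E) (use reg0 z in auto)
  qed
qed

lemma sum_single: "sum (\<lambda>a. if a = u then c else 0) V = c" using finV uV by simp

lemma caseN:
  assumes g: "g \<in> topspace (geom W)" and r: "\<rho> \<in> L" "{x. g x \<noteq> 0} \<subseteq> WN \<rho>"
  shows "G2 g = g" "G1 g = (\<lambda>z. if z = Inl u then 1 else 0)"
    "{z. Phi (Psi g) z \<noteq> 0} \<subseteq> Inl ` insert u \<rho>"
proof -
  note wp = Wpt[OF g]
  have zs: "g (Inr (Inr b)) = 0" for b using r(2) unfolding WN_def by blast
  have zl: "a \<noteq> u \<Longrightarrow> g (Inl a) = 0" for a using r(2) unfolding WN_def by blast
  have zr: "g (Inr (Inl a)) \<noteq> 0 \<Longrightarrow> a \<in> \<rho>" for a using r(2) unfolding WN_def by blast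
  show "G2 g = g"
  proof
    fix x show "G2 g x = g x"
      by (cases x rule: sum3E) (use reg0 zs in auto)
  qed
  have "sum (\<lambda>a. g (Inl a)) V = sum (\<lambda>a. if a = u then g (Inl u) else 0) V"
    by (rule sum.cong) (use zl in auto)
  then have sl: "sum (\<lambda>a. g (Inl a)) V = g (Inl u)" using sum_single by simp
  have one: "g (Inl u) + pW g = 1" using wp(6) sl zs by (simp add: pW_def)
  show "G1 g = (\<lambda>z. if z = Inl u then 1 else 0)"
  proof
    fix x show "G1 g x = (if x = Inl u then 1 else 0)"
      by (cases x rule: sum3E) (use reg0 zs zl one in auto)
  qed
  have pv: "Psi g v = 0" using Psi_v[OF g] zs by simp
  show "{z. Phi (Psi g) z \<noteq> 0} \<subseteq> Inl ` insert u \<rho>"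
  proof
    fix z assume "z \<in> {z. Phi (Psi g) z \<noteq> 0}"
    then have "(\<exists>a. z = Inl a \<and> a \<noteq> v \<and> Psi g a \<noteq> 0)"
      using Phi_supp[of "Psi g" z] pv reg0 by auto
    then obtain a where a: "z = Inl a" "Psi g a \<noteq> 0" by blast
    then have "g (Inl a) \<noteq> 0 \<or> g (Inr (Inl a)) \<noteq> 0" using zs by (auto simp: Psi_def split: if_splits)
    then have "a = u \<or> a \<in> \<rho>" using zl zr by blast
    then show "z \<in> Inl ` insert u \<rho>" using a by blast
  qed
qed

lemma caseS:
  assumes g: "g \<in> topspace (geom W)" and r: "\<rho> \<in> L" "{x. g x \<noteq> 0} \<subseteq> WS \<rho>"
  defines "t \<equiv> g (Inr (Inr False))"
  shows "0 \<le> t" "t \<le> 1" "pW g = 1 - t" "G1 g (Inl u) = cM t" "\<And>a. a \<noteq> u \<Longrightarrow> G1 g (Inl a) = 0"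
    "\<And>a. G2 g (Inl a) = 0"
    "\<And>z. Phi (Psi g) z \<noteq> 0 \<Longrightarrow> (\<exists>a. z = Inl a \<and> cA t \<noteq> 0 \<and> a \<in> \<rho>) \<or> (z = Inl u \<and> cB t \<noteq> 0)
       \<or> (\<exists>a. z = Inr (Inl a) \<and> cC t \<noteq> 0 \<and> a \<in> \<rho>) \<or> (z = Inr (Inr False) \<and> cD t \<noteq> 0)"
    "\<And>z. G1 g z \<noteq> 0 \<Longrightarrow> (z = Inl u \<and> cM t \<noteq> 0)
       \<or> (\<exists>a. z = Inr (Inl a) \<and> cC t \<noteq> 0 \<and> a \<in> \<rho>) \<or> (z = Inr (Inr False) \<and> cD t \<noteq> 0)"
    "\<And>z. G2 g z \<noteq> 0 \<Longrightarrow> (\<exists>a. z = Inr (Inl a) \<and> a \<in> \<rho>) \<or> (z = Inr (Inr False) \<and> cD t \<noteq> 0)"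
proof -
  note wp = Wpt[OF g]
  have zl: "g (Inl a) = 0" for a using r(2) unfolding WS_def by blast
  have zr: "g (Inr (Inl a)) \<noteq> 0 \<Longrightarrow> a \<in> \<rho>" for a using r(2) unfolding WS_def by blast
  have zt: "g (Inr (Inr True)) = 0" by (rule wp(5))
  have pw: "pW g = 1 - t" using wp(6) zl by (simp add: pW_def t_def)
  show "pW g = 1 - t" by (rule pw)
  show "0 \<le> t" using wp(1) t_def by simp
  have "0 \<le> pW g" unfolding pW_def using wp(1) by (simp add: sum_nonneg)
  then show "t \<le> 1" using pw by simp
  show "G1 g (Inl u) = cM t" using pw zl t_def by simp
  show "\<And>a. a \<noteq> u \<Longrightarrow> G1 g (Inl a) = 0" using zl by simp
  show "\<And>a. G2 g (Inl a) = 0" using zl by simp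
  have pv: "Psi g v = t" using Psi_v[OF g] t_def by simp
  have ps: "Psi g a \<noteq> 0 \<Longrightarrow> a \<noteq> v \<Longrightarrow> a \<in> \<rho>" for a using zl zr by (auto simp: Psi_def)
  fix z
  show "Phi (Psi g) z \<noteq> 0 \<Longrightarrow> (\<exists>a. z = Inl a \<and> cA t \<noteq> 0 \<and> a \<in> \<rho>) \<or> (z = Inl u \<and> cB t \<noteq> 0)
       \<or> (\<exists>a. z = Inr (Inl a) \<and> cC t \<noteq> 0 \<and> a \<in> \<rho>) \<or> (z = Inr (Inr False) \<and> cD t \<noteq> 0)"
  proof -
    assume "Phi (Psi g) z \<noteq> 0"
    from Phi_supp[OF this] show ?thesis using pv ps by metis
  qed
  show "G1 g z \<noteq> 0 \<Longrightarrow> (z = Inl u \<and> cM t \<noteq> 0)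
       \<or> (\<exists>a. z = Inr (Inl a) \<and> cC t \<noteq> 0 \<and> a \<in> \<rho>) \<or> (z = Inr (Inr False) \<and> cD t \<noteq> 0)"
    using pw zl zr by (cases z rule: sum3E) (auto simp: t_def split: if_splits)
  show "G2 g z \<noteq> 0 \<Longrightarrow> (\<exists>a. z = Inr (Inl a) \<and> a \<in> \<rho>) \<or> (z = Inr (Inr False) \<and> cD t \<noteq> 0)"
    using zl zr by (cases z rule: sum3E) (auto simp: t_def split: if_splits)
qed

lemma unW: "F \<in> W \<Longrightarrow> A \<subseteq> F \<Longrightarrow> B \<subseteq> F \<Longrightarrow> A \<union> B \<in> W"
  using dcD[OF dcW] by (metis Un_least)

lemma pW_nn: "g \<in> topspace (geom W) \<Longrightarrow> 0 \<le> pW g"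
  unfolding pW_def using Wpt(1) by (simp add: sum_nonneg)

lemma G1_nn: assumes g: "g \<in> topspace (geom W)" shows "0 \<le> G1 g z"
proof -
  note wp = Wpt[OF g]
  have "0 \<le> g (Inl u) + pW g + g (Inr (Inr False))" using wp(1) pW_nn[OF g] by simp
  then show ?thesis using wp(1) nonneg by (cases z rule: sum3E) auto
qed

lemma G2_nn: assumes g: "g \<in> topspace (geom W)" shows "0 \<le> G2 g z"
proof -
  have nn: "0 \<le> nrm x" for x using nonneg(6)[of x] by simp
  show ?thesis using Wpt(1)[OF g] nonneg(4) nn by (cases z rule: sum3E) auto
qed

lemma SFW: "{z. h z \<noteq> 0} \<subseteq> F \<Longrightarrow> F \<in> W \<Longrightarrow> {z. h z \<noteq> 0} \<subseteq> FW"
  using W_FW by blast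

lemma G1_in: assumes g: "g \<in> topspace (geom W)" shows "G1 g \<in> topspace (geom W)"
proof (rule Wcases[OF Wpt(2)[OF g]])
  fix \<sigma> assume "\<sigma> \<in> K'" "{x. g x \<noteq> 0} \<subseteq> Inl ` \<sigma>"
  then show ?thesis using caseI[OF g] g by simp
next
  fix \<rho> assume r: "\<rho> \<in> L" "{x. g x \<noteq> 0} \<subseteq> WN \<rho>"
  have e: "G1 g = (\<lambda>z. if z = Inl u then 1 else 0)" by (rule caseN(2)[OF g r])
  have sub: "{z. G1 g z \<noteq> 0} \<subseteq> WN \<rho>" unfolding e WN_def by auto
  show ?thesis
  proof (rule geomI[OF dcW G1_nn[OF g] finFW SFW[OF sub W_N[OF r(1)]] W_N[OF r(1)] sub])
    show "sum (G1 g) FW = 1" unfolding sumFW unfolding e using sum_single by simp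
  qed
next
  fix \<rho> assume r: "\<rho> \<in> L" "{x. g x \<noteq> 0} \<subseteq> WS \<rho>"
  define t where "t = g (Inr (Inr False))"
  note cs = caseS[OF g r, folded t_def]
  obtain F where F: "F \<in> W" "{z. G1 g z \<noteq> 0} \<subseteq> F"
  proof (cases "t < 2/3")
    case True
    then have "cD t = 0" using cD_pos by force
    then have "{z. G1 g z \<noteq> 0} \<subseteq> WN \<rho>" using cs(8) unfolding WN_def by blast
    then show ?thesis using that W_N[OF r(1)] by blast
  next
    case False
    then have "cM t = 0" using cM_pos by force
    then have "{z. G1 g z \<noteq> 0} \<subseteq> WS \<rho>" using cs(8) unfolding WS_def by blast
    then show ?thesis using that W_S[OF r(1)] by blast
  qed
  show ?thesis
  proof (rule geomI[OF dcW G1_nn[OF g] finFW SFW[OF F(2) F(1)] F])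
    have a: "sum (\<lambda>a. G1 g (Inl a)) V = cM t"
    proof -
      have "sum (\<lambda>a. G1 g (Inl a)) V = sum (\<lambda>a. if a = u then cM t else 0) V"
        by (rule sum.cong) (use cs(4,5) in auto)
      then show ?thesis using sum_single by simp
    qed
    have b: "sum (\<lambda>a. G1 g (Inr (Inl a))) V = cC t * (1 - t)"
      using cs(3) by (simp add: t_def[symmetric] sum_distrib_left[symmetric] pW_def)
    show "sum (G1 g) FW = 1" unfolding sumFW a b using num_G1[OF cs(1,2)] by (simp add: t_def)
  qed
qed

lemma G2_in: assumes g: "g \<in> topspace (geom W)" shows "G2 g \<in> topspace (geom W)"
proof (rule Wcases[OF Wpt(2)[OF g]])
  fix \<sigma> assume "\<sigma> \<in> K'" "{x. g x \<noteq> 0} \<subseteq> Inl ` \<sigma>"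
  then show ?thesis using caseI[OF g] g by simp
next
  fix \<rho> assume r: "\<rho> \<in> L" "{x. g x \<noteq> 0} \<subseteq> WN \<rho>"
  then show ?thesis using caseN[OF g] g by simp
next
  fix \<rho> assume r: "\<rho> \<in> L" "{x. g x \<noteq> 0} \<subseteq> WS \<rho>"
  define t where "t = g (Inr (Inr False))"
  note cs = caseS[OF g r, folded t_def]
  have sub: "{z. G2 g z \<noteq> 0} \<subseteq> WS \<rho>" using cs(9) unfolding WS_def by blast
  show ?thesis
  proof (rule geomI[OF dcW G2_nn[OF g] finFW SFW[OF sub W_S[OF r(1)]] W_S[OF r(1)] sub])
    have a: "sum (\<lambda>a. G2 g (Inl a)) V = 0" using cs(6) by simp
    have b: "sum (\<lambda>a. G2 g (Inr (Inl a))) V = (1 - t) * nrm t"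
      using cs(3) by (simp add: t_def[symmetric] sum_distrib_left[symmetric] pW_def mult.commute)
    show "sum (G2 g) FW = 1" unfolding sumFW a b using num_GK[OF cs(1,2)] by (simp add: t_def)
  qed
qed

lemma cont_pW: "continuous_map (geom W) euclideanreal pW"
  unfolding pW_def[abs_def] by (intro continuous_map_sum finV proj_cont)

lemma cont_G1: "continuous_map (geom W) (geom W) G1"
proof (rule cont_geom[OF G1_in])
  fix z :: "'a + ('a + bool)"
  have p: "continuous_map (geom W) euclideanreal (\<lambda>f. f x)" for x by (rule proj_cont)
  show "continuous_map (geom W) euclideanreal (\<lambda>g. G1 g z)"
  proof (cases z rule: sum3E)
    case (l a) then show ?thesis
      by (cases "a = u") (simp_all add: continuous_map_add continuous_map_real_mult cont_num p cont_pW)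
  next
    case (m a) then show ?thesis by (simp add: continuous_map_real_mult cont_num p)
  next
    case (r b) then show ?thesis by (cases b) (simp_all add: cont_num p)
  qed
qed

lemma cont_G2: "continuous_map (geom W) (geom W) G2"
proof (rule cont_geom[OF G2_in])
  fix z :: "'a + ('a + bool)"
  have p: "continuous_map (geom W) euclideanreal (\<lambda>f. f x)" for x by (rule proj_cont)
  show "continuous_map (geom W) euclideanreal (\<lambda>g. G2 g z)"
  proof (cases z rule: sum3E)
    case (l a) then show ?thesis by (simp add: p)
  next
    case (m a) then show ?thesis by (simp add: continuous_map_real_mult cont_num p)
  next
    case (r b) then show ?thesis by (cases b) (simp_all add: cont_num p)
  qed
qed

lemma hW: "homotopic_with (\<lambda>x. True) (geom W) (geom W) (Phi \<circ> Psi) id"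
proof -
  have cW: "continuous_map (geom W) (geom W) (Phi \<circ> Psi)"
    by (rule continuous_map_compose[OF cont_Psi cont_Phi])
  have h1: "homotopic_with (\<lambda>x. True) (geom W) (geom W) (Phi \<circ> Psi) G1"
  proof (rule SL[OF dcW cW cont_G1])
    fix g assume g: "g \<in> topspace (geom W)"
    show "{y. (Phi \<circ> Psi) g y \<noteq> 0} \<union> {y. G1 g y \<noteq> 0} \<in> W"
    proof (rule Wcases[OF Wpt(2)[OF g]])
      fix \<sigma> assume "\<sigma> \<in> K'" "{x. g x \<noteq> 0} \<subseteq> Inl ` \<sigma>"
      then show ?thesis using caseI[OF g] Wpt(2)[OF g] by simp
    next
      fix \<rho> assume r: "\<rho> \<in> L" "{x. g x \<noteq> 0} \<subseteq> WN \<rho>"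
      have b: "{y. G1 g y \<noteq> 0} \<subseteq> Inl ` insert u \<rho>" unfolding caseN(2)[OF g r] by auto
      have a: "{y. (Phi \<circ> Psi) g y \<noteq> 0} \<subseteq> Inl ` insert u \<rho>" using caseN(3)[OF g r] by simp
      show ?thesis by (rule unW[OF W_Inl[OF F1[OF r(1)]] a b])
    next
      fix \<rho> assume r: "\<rho> \<in> L" "{x. g x \<noteq> 0} \<subseteq> WS \<rho>"
      define t where "t = g (Inr (Inr False))"
      note cs = caseS[OF g r, folded t_def]
      consider "t \<le> 1/3" | "1/3 < t" "t \<le> 2/3" | "2/3 < t" by linarith
      then show ?thesis
      proof cases
        case 1
        note rr = reg1[OF cs(1) 1]
        have "{y. (Phi \<circ> Psi) g y \<noteq> 0} \<subseteq> Inl ` insert u \<rho>" using cs(7) rr by fastforce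
        moreover have "{y. G1 g y \<noteq> 0} \<subseteq> Inl ` insert u \<rho>" using cs(8) rr by fastforce
        ultimately show ?thesis using unW[OF W_Inl[OF F1[OF r(1)]]] by blast
      next
        case 2
        note rr = reg2[OF 2]
        have "{y. (Phi \<circ> Psi) g y \<noteq> 0} \<subseteq> WN \<rho>" using cs(7) rr unfolding WN_def by fastforce
        moreover have "{y. G1 g y \<noteq> 0} \<subseteq> WN \<rho>" using cs(8) rr unfolding WN_def by fastforce
        ultimately show ?thesis using unW[OF W_N[OF r(1)]] by blast
      next
        case 3
        note rr = reg3[OF 3]
        have "{y. (Phi \<circ> Psi) g y \<noteq> 0} \<subseteq> WS \<rho>" using cs(7) rr unfolding WS_def by fastforce
        moreover have "{y. G1 g y \<noteq> 0} \<subseteq> WS \<rho>" using cs(8) rr unfolding WS_def by fastforce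
        ultimately show ?thesis using unW[OF W_S[OF r(1)]] by blast
      qed
    qed
  qed
  have h2: "homotopic_with (\<lambda>x. True) (geom W) (geom W) G1 G2"
  proof (rule SL[OF dcW cont_G1 cont_G2])
    fix g assume g: "g \<in> topspace (geom W)"
    show "{y. G1 g y \<noteq> 0} \<union> {y. G2 g y \<noteq> 0} \<in> W"
    proof (rule Wcases[OF Wpt(2)[OF g]])
      fix \<sigma> assume "\<sigma> \<in> K'" "{x. g x \<noteq> 0} \<subseteq> Inl ` \<sigma>"
      then show ?thesis using caseI[OF g] Wpt(2)[OF g] by simp
    next
      fix \<rho> assume r: "\<rho> \<in> L" "{x. g x \<noteq> 0} \<subseteq> WN \<rho>"
      have "{y. G1 g y \<noteq> 0} \<subseteq> WN \<rho>" unfolding caseN(2)[OF g r] WN_def by auto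
      then show ?thesis using unW[OF W_N[OF r(1)] _ r(2)] caseN(1)[OF g r] by simp
    next
      fix \<rho> assume r: "\<rho> \<in> L" "{x. g x \<noteq> 0} \<subseteq> WS \<rho>"
      define t where "t = g (Inr (Inr False))"
      note cs = caseS[OF g r, folded t_def]
      show ?thesis
      proof (cases "t < 2/3")
        case True
        then have "cD t = 0" using cD_pos by force
        then have "{y. G1 g y \<noteq> 0} \<subseteq> WN \<rho>" "{y. G2 g y \<noteq> 0} \<subseteq> WN \<rho>"
          using cs(8,9) unfolding WN_def by blast+
        then show ?thesis using unW[OF W_N[OF r(1)]] by blast
      next
        case False
        then have "cM t = 0" using cM_pos by force
        then have "{y. G1 g y \<noteq> 0} \<subseteq> WS \<rho>" "{y. G2 g y \<noteq> 0} \<subseteq> WS \<rho>"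
          using cs(8,9) unfolding WS_def by blast+
        then show ?thesis using unW[OF W_S[OF r(1)]] by blast
      qed
    qed
  qed
  have h3: "homotopic_with (\<lambda>x. True) (geom W) (geom W) G2 id"
  proof (rule SL[OF dcW cont_G2])
    show "continuous_map (geom W) (geom W) id" by simp
    fix g assume g: "g \<in> topspace (geom W)"
    show "{y. G2 g y \<noteq> 0} \<union> {y. id g y \<noteq> 0} \<in> W"
    proof (rule Wcases[OF Wpt(2)[OF g]])
      fix \<sigma> assume "\<sigma> \<in> K'" "{x. g x \<noteq> 0} \<subseteq> Inl ` \<sigma>"
      then show ?thesis using caseI[OF g] Wpt(2)[OF g] by simp
    next
      fix \<rho> assume r: "\<rho> \<in> L" "{x. g x \<noteq> 0} \<subseteq> WN \<rho>"
      then show ?thesis using caseN(1)[OF g r] Wpt(2)[OF g] by simp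
    next
      fix \<rho> assume r: "\<rho> \<in> L" "{x. g x \<noteq> 0} \<subseteq> WS \<rho>"
      have "{y. G2 g y \<noteq> 0} \<subseteq> WS \<rho>" using caseS(9)[OF g r] unfolding WS_def by blast
      then show ?thesis using unW[OF W_S[OF r(1)] _ r(2)] by simp
    qed
  qed
  show ?thesis using homotopic_with_trans[OF h1 homotopic_with_trans[OF h2 h3]] .
qed

lemma part2: "K \<simeq>\<^sub>c W"
  unfolding htpy_eq_def homotopy_equivalent_space_def
  using cont_Phi cont_Psi hK hW by blast


end

theorem mainTheorem18:
  fixes V :: "'a set" and E :: "'a \<Rightarrow> 'a \<Rightarrow> bool" and d :: nat
  assumes "simple_graph V E" and "d \<ge> 2" and "card V \<ge> 2"
  shows "(\<forall>u\<in>V. \<forall>v\<in>V. u \<noteq> v \<and> closed_nbhd V E v \<subseteq> closed_nbhd V E u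
            \<longrightarrow> BI d V E \<simeq>\<^sub>c BI d (V - {v}) (del_edges E v))
       \<and> (\<forall>u\<in>V. \<forall>v\<in>V. u \<noteq> v \<and> open_nbhd V E v \<subseteq> open_nbhd V E u
            \<longrightarrow> (\<exists>a0\<in>V - {v}. BI d V E \<simeq>\<^sub>c
                  wedge (BI d (V - {v}) (del_edges E v)) (susp (link (BI d V E) v)) a0 (Inr True)))"
proof (intro conjI ballI impI)
  fix u v assume "u \<in> V" "v \<in> V" "u \<noteq> v \<and> closed_nbhd V E v \<subseteq> closed_nbhd V E u"
  then show "BI d V E \<simeq>\<^sub>c BI d (V - {v}) (del_edges E v)"
    using part1[OF assms(1)] by blast
next
  fix u v assume uV: "u \<in> V" and vV: "v \<in> V" and h: "u \<noteq> v \<and> open_nbhd V E v \<subseteq> open_nbhd V E u"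
  interpret P2 V E d u v
    by (unfold_locales) (use assms(1) uV vV h in auto)
  have "BI d V E \<simeq>\<^sub>c wedge (BI d (V - {v}) (del_edges E v)) (susp (link (BI d V E) v)) u (Inr True)"
    using part2 unfolding K_def W_def K'_def L_def .
  moreover have "u \<in> V - {v}" using uV h by blast
  ultimately show "\<exists>a0\<in>V - {v}. BI d V E \<simeq>\<^sub>c
                  wedge (BI d (V - {v}) (del_edges E v)) (susp (link (BI d V E) v)) a0 (Inr True)"
    by blast
qed

end
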